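(* Let $\{(i\mid A_i): i\in[m]\}$ be an index coding instance, $B_i=[m]\setminus(A_i\cup\{i\})$, let $\boldsymbol{G}\in\{0,1\}^{r\times m}$ with row supports $G_j=\{i: g_{j,i}=1\}$, let $k\in[r]$ and let $d\ge1$ be an integer. Suppose $|F_K|\ge d-1+|K|$ for every nonempty $K\subseteq[k]$, where $F_K=\bigcup_{j\in K}G_j$. If $i\in[m]$ satisfies (1) $|F_{[k]}|=d-1+k$, (2) $\{i\}\cup A_i\subseteq F_{[k]}$, and (3) $|A_i|\ge d-1$, then $$\mathrm{mcm}(\boldsymbol{G}_{[k]}^{\{i\}\cup B_i})=1+\mathrm{mcm}(\boldsymbol{G}_{[k]}^{B_i}).$$
   Context: $\boldsymbol{G}_{[k]}^{L}$ is the submatrix of $\boldsymbol{G}$ formed by its first $k$ rows and the columns indexed by $L$. $\mathrm{mcm}(\boldsymbol{G})$ is the maximum number of entries equal to $1$ no two of which lie in the same row or column (maximum matching size of the associated row–column bipartite graph); it is $0$ for a matrix with no columns. *)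

theory Defs
  imports Main
begin

text \<open>A 0/1 matrix G with rows indexed by 1..r and columns by 1..m is modelled as
  a function nat => nat => nat (entry g_{j,i} = G j i).\<close>

definition is_matching :: "(nat \<Rightarrow> nat \<Rightarrow> nat) \<Rightarrow> nat set \<Rightarrow> nat set \<Rightarrow> (nat \<times> nat) set \<Rightarrow> bool" where
  "is_matching G R L M \<longleftrightarrow>
     M \<subseteq> R \<times> L \<and> (\<forall>(j, i) \<in> M. G j i = 1) \<and>
     (\<forall>(j, i) \<in> M. \<forall>(j', i') \<in> M. (j = j' \<or> i = i') \<longrightarrow> (j, i) = (j', i'))"

definition mcm :: "(nat \<Rightarrow> nat \<Rightarrow> nat) \<Rightarrow> nat set \<Rightarrow> nat set \<Rightarrow> nat" where
  "mcm G R L = Max (card ` {M. is_matching G R L M})"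

definition row_supp :: "(nat \<Rightarrow> nat \<Rightarrow> nat) \<Rightarrow> nat \<Rightarrow> nat \<Rightarrow> nat set" where
  "row_supp G m j = {i \<in> {1..m}. G j i = 1}"

definition F_set :: "(nat \<Rightarrow> nat \<Rightarrow> nat) \<Rightarrow> nat \<Rightarrow> nat set \<Rightarrow> nat set" where
  "F_set G m K = (\<Union>j\<in>K. row_supp G m j)"

end

theory Submission
  imports Defs
begin

lemma hall_marriage:
  fixes S :: "'a \<Rightarrow> 'b set"
  assumes "finite I" "\<forall>x\<in>I. finite (S x)" "\<forall>J\<subseteq>I. card J \<le> card (\<Union>(S ` J))"
  shows "\<exists>f. inj_on f I \<and> (\<forall>x\<in>I. f x \<in> S x)"
  using assms
proof (induction "card I" arbitrary: I S rule: less_induct)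
  case less
  note fin = less.prems(1) and finS = less.prems(2) and H = less.prems(3)
  show ?case
  proof (cases "I = {}")
    case True then show ?thesis by auto
  next
    case Inz: False
    show ?thesis
    proof (cases "\<exists>J. J \<noteq> {} \<and> J \<subset> I \<and> card (\<Union>(S ` J)) = card J")
      case True
      then obtain J where J: "J \<noteq> {}" "J \<subset> I" "card (\<Union>(S ` J)) = card J" by blast
      have finJ: "finite J" using J fin finite_subset by blast
      have "card J < card I" using J fin psubset_card_mono by blast
      moreover have "\<forall>x\<in>J. finite (S x)" using J finS by auto
      moreover have "\<forall>K\<subseteq>J. card K \<le> card (\<Union>(S ` K))" using J H by blast
      ultimately obtain g where g: "inj_on g J" "\<forall>x\<in>J. g x \<in> S x"
        using less.hyps[of J S] finJ by blast
      define U where "U = \<Union>(S ` J)"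
      have finU: "finite U" unfolding U_def using finJ J finS by auto
      have "card (I - J) = card I - card J" using J finJ by (simp add: card_Diff_subset psubset_imp_subset)
      moreover have "card J > 0" using finJ J by auto
      moreover have "card J \<le> card I" using J fin card_mono psubset_imp_subset by blast
      ultimately have "card (I - J) < card I" by linarith
      moreover have "finite (I - J)" using fin by auto
      moreover have "\<forall>x\<in>I - J. finite (S x - U)" using finS by auto
      moreover have "\<forall>K\<subseteq>I - J. card K \<le> card (\<Union>((\<lambda>z. S z - U) ` K))"
      proof (intro allI impI)
        fix K assume K: "K \<subseteq> I - J"
        have finK: "finite K" using K fin finite_subset by blast
        have eq: "\<Union>((\<lambda>z. S z - U) ` K) = \<Union>(S ` (K \<union> J)) - U" unfolding U_def by blast
        have sub: "U \<subseteq> \<Union>(S ` (K \<union> J))" unfolding U_def by blast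
        have finKJ: "finite (\<Union>(S ` (K \<union> J)))" using finK finJ K J finS by auto
        have KJ: "K \<union> J \<subseteq> I" using K J by blast
        have "card (K \<union> J) \<le> card (\<Union>(S ` (K \<union> J)))" using H[rule_format, OF KJ] .
        moreover have "card (K \<union> J) = card K + card J"
          using K finK finJ by (subst card_Un_disjoint) auto
        moreover have "card (\<Union>(S ` (K \<union> J)) - U) = card (\<Union>(S ` (K \<union> J))) - card U"
          using sub finU by (simp add: card_Diff_subset)
        ultimately show "card K \<le> card (\<Union>((\<lambda>z. S z - U) ` K))"
          using eq J(3) unfolding U_def by simp
      qed
      ultimately obtain h where h: "inj_on h (I - J)" "\<forall>x\<in>I - J. h x \<in> S x - U"
        using less.hyps[of "I - J" "\<lambda>z. S z - U"] by blast
      define f where "f = (\<lambda>z. if z \<in> J then g z else h z)"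
      have "\<forall>x\<in>I. f x \<in> S x" using g h unfolding f_def by auto
      moreover have "inj_on f I"
      proof (rule inj_onI)
        fix x y assume xy: "x \<in> I" "y \<in> I" "f x = f y"
        show "x = y"
        proof (cases "x \<in> J"; cases "y \<in> J")
          assume "x \<in> J" "y \<in> J" then show ?thesis using xy g unfolding f_def by (auto dest: inj_onD)
        next
          assume a: "x \<in> J" "y \<notin> J"
          then have "f x \<in> U" using g unfolding f_def U_def by auto
          moreover have "f y \<notin> U" using a h xy unfolding f_def by auto
          ultimately show ?thesis using xy by simp
        next
          assume a: "x \<notin> J" "y \<in> J"
          then have "f y \<in> U" using g unfolding f_def U_def by auto
          moreover have "x \<in> I - J" using a xy by blast
          then have "f x \<notin> U" using a h unfolding f_def by auto
          ultimately show ?thesis using xy by simp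
        next
          assume "x \<notin> J" "y \<notin> J" then show ?thesis using xy h unfolding f_def by (auto dest: inj_onD)
        qed
      qed
      ultimately show ?thesis by blast
    next
      case False
      have strict: "\<forall>J. J \<noteq> {} \<and> J \<subset> I \<longrightarrow> card J < card (\<Union>(S ` J))"
      proof (intro allI impI)
        fix J assume a: "J \<noteq> {} \<and> J \<subset> I"
        then have "card J \<le> card (\<Union>(S ` J))" using H psubset_imp_subset by blast
        moreover have "card (\<Union>(S ` J)) \<noteq> card J" using False a by blast
        ultimately show "card J < card (\<Union>(S ` J))" by simp
      qed
      obtain x where x: "x \<in> I" using Inz by blast
      have "card {x} \<le> card (\<Union>(S ` {x}))" using H x by blast
      then have "card {x} \<le> card (S x)" by simp
      then have "S x \<noteq> {}" by auto
      then obtain y where y: "y \<in> S x" by blast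
      have "card (I - {x}) < card I" using fin x by (rule card_Diff1_less)
      moreover have "finite (I - {x})" using fin by auto
      moreover have "\<forall>z\<in>I - {x}. finite (S z - {y})" using finS by auto
      moreover have "\<forall>K\<subseteq>I - {x}. card K \<le> card (\<Union>((\<lambda>z. S z - {y}) ` K))"
      proof (intro allI impI)
        fix K assume K: "K \<subseteq> I - {x}"
        show "card K \<le> card (\<Union>((\<lambda>z. S z - {y}) ` K))"
        proof (cases "K = {}")
          case True then show ?thesis by simp
        next
          case False
          have "K \<subset> I" using K x by blast
          then have lt: "card K < card (\<Union>(S ` K))" using strict False by blast
          have eq: "\<Union>((\<lambda>z. S z - {y}) ` K) = \<Union>(S ` K) - {y}" by blast
          have "card (\<Union>(S ` K)) - 1 \<le> card (\<Union>(S ` K) - {y})"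
            by (cases "y \<in> \<Union>(S ` K)") (auto simp: card_Diff_singleton_if)
          then show ?thesis using lt eq by simp
        qed
      qed
      ultimately obtain h where h: "inj_on h (I - {x})" "\<forall>z\<in>I - {x}. h z \<in> S z - {y}"
        using less.hyps[of "I - {x}" "\<lambda>z. S z - {y}"] by blast
      define f where "f = h(x := y)"
      have "\<forall>z\<in>I. f z \<in> S z" using h y unfolding f_def by auto
      moreover have "inj_on f I"
        unfolding f_def using h by (auto simp: inj_on_def)
      ultimately show ?thesis by blast
    qed
  qed
qed

lemma match_sub: "is_matching G R L M \<Longrightarrow> M \<subseteq> R \<times> L" unfolding is_matching_def by simp
lemma match_one: "is_matching G R L M \<Longrightarrow> (j, c) \<in> M \<Longrightarrow> G j c = 1"
  unfolding is_matching_def by (drule conjunct2, drule conjunct1) (drule bspec, assumption, simp)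
lemma match_pair:
  assumes "is_matching G R L M" "(j, c) \<in> M" "(j', c') \<in> M" "j = j' \<or> c = c'"
  shows "j = j' \<and> c = c'"
proof -
  have "\<forall>(j, i) \<in> M. \<forall>(j', i') \<in> M. (j = j' \<or> i = i') \<longrightarrow> (j, i) = (j', i')"
    using assms(1) unfolding is_matching_def by (elim conjE)
  then have "\<forall>(j', i') \<in> M. (j = j' \<or> c = i') \<longrightarrow> (j, c) = (j', i')"
    using assms(2) by (drule_tac x="(j,c)" in bspec) simp_all
  then have "(j = j' \<or> c = c') \<longrightarrow> (j, c) = (j', c')"
    using assms(3) by (drule_tac x="(j',c')" in bspec) simp_all
  then show ?thesis using assms(4) by simp
qed
lemma match_intro:
  assumes "M \<subseteq> R \<times> L" "\<And>j c. (j, c) \<in> M \<Longrightarrow> G j c = 1"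
    "\<And>j c j' c'. (j, c) \<in> M \<Longrightarrow> (j', c') \<in> M \<Longrightarrow> j = j' \<or> c = c' \<Longrightarrow> j = j' \<and> c = c'"
  shows "is_matching G R L M"
  unfolding is_matching_def
proof (intro conjI)
  show "M \<subseteq> R \<times> L" by fact
  show "\<forall>(j, i) \<in> M. G j i = 1" using assms(2) by blast
  show "\<forall>(j, i) \<in> M. \<forall>(j', i') \<in> M. (j = j' \<or> i = i') \<longrightarrow> (j, i) = (j', i')"
  proof (intro ballI, clarify)
    fix a b a' b' assume "(a, b) \<in> M" "(a', b') \<in> M" "a = a' \<or> b = b'"
    then show "a = a' \<and> b = b'" using assms(3) by blast
  qed
qed

lemma matchings_finite:
  assumes "finite R" "finite L"
  shows "finite {M. is_matching G R L M}"
proof -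
  have "{M. is_matching G R L M} \<subseteq> Pow (R \<times> L)" using match_sub by blast
  moreover have "finite (Pow (R \<times> L))" using assms by simp
  ultimately show ?thesis by (rule finite_subset)
qed

lemma matching_le_mcm:
  assumes "finite R" "finite L" "is_matching G R L M"
  shows "card M \<le> mcm G R L"
proof -
  have fin: "finite (card ` {M. is_matching G R L M})" using matchings_finite[OF assms(1,2), of G] by (rule finite_imageI)
  have "card M \<in> card ` {M. is_matching G R L M}" using assms(3) by blast
  then show ?thesis unfolding mcm_def by (rule Max_ge[OF fin])
qed

lemma mcm_attained:
  assumes "finite R" "finite L"
  shows "\<exists>M. is_matching G R L M \<and> card M = mcm G R L"
proof -
  have "is_matching G R L {}" by (rule match_intro) auto
  then have ne: "card ` {M. is_matching G R L M} \<noteq> {}" by blast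
  have fin: "finite (card ` {M. is_matching G R L M})" using matchings_finite[OF assms, of G] by (rule finite_imageI)
  have "mcm G R L \<in> card ` {M. is_matching G R L M}"
    unfolding mcm_def by (rule Max_in[OF fin ne])
  then obtain M where "M \<in> {M. is_matching G R L M}" "mcm G R L = card M" by (rule imageE)
  then show ?thesis by (metis mem_Collect_eq)
qed

lemma matching_inj_snd:
  assumes "is_matching G R L M" shows "inj_on snd M"
proof (rule inj_onI)
  fix p q assume pq: "p \<in> M" "q \<in> M" "snd p = snd q"
  obtain j c where p: "p = (j, c)" by (rule prod.exhaust)
  obtain j' c' where q: "q = (j', c')" by (rule prod.exhaust)
  have cc: "c = c'" using pq(3) p q by simp
  have "(j, c) \<in> M" "(j', c') \<in> M" using pq(1,2) p q by blast+
  then have "j = j' \<and> c = c'" using match_pair[OF assms] cc by blast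
  then show "p = q" using p q by simp
qed

theorem lemma2:
  fixes m r k d i :: nat
    and A :: "nat \<Rightarrow> nat set"
    and G :: "nat \<Rightarrow> nat \<Rightarrow> nat"
  assumes ic_instance: "\<forall>l\<in>{1..m}. A l \<subseteq> {1..m} - {l}"
    and binary: "\<forall>j\<in>{1..r}. \<forall>l\<in>{1..m}. G j l \<in> {0, 1}"
    and k_range: "k \<in> {1..r}"
    and d_pos: "d \<ge> 1"
    and hall: "\<forall>K. K \<noteq> {} \<and> K \<subseteq> {1..k} \<longrightarrow> card (F_set G m K) \<ge> d - 1 + card K"
    and i_range: "i \<in> {1..m}"
    and c1: "card (F_set G m {1..k}) = d - 1 + k"
    and c2: "{i} \<union> A i \<subseteq> F_set G m {1..k}"
    and c3: "card (A i) \<ge> d - 1"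
  shows "mcm G {1..k} ({i} \<union> ({1..m} - (A i \<union> {i})))
           = 1 + mcm G {1..k} ({1..m} - (A i \<union> {i}))"
proof -
  define Fk where "Fk = F_set G m {1..k}"
  define B where "B = {1..m} - (A i \<union> {i})"
  define L1 where "L1 = {i} \<union> B"
  have finB: "finite B" unfolding B_def by auto
  have finL1: "finite L1" unfolding L1_def using finB by auto
  have Fk_sub: "Fk \<subseteq> {1..m}" unfolding Fk_def F_set_def row_supp_def by auto
  have finFk: "finite Fk" using Fk_sub finite_subset by blast
  have mem_Fk: "c \<in> Fk" if "j \<in> {1..k}" "c \<in> {1..m}" "G j c = 1" for j c
    using that unfolding Fk_def F_set_def row_supp_def by auto
  have upper: "mcm G {1..k} L1 \<le> 1 + mcm G {1..k} B"
  proof -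
    obtain M where M: "is_matching G {1..k} L1 M" "card M = mcm G {1..k} L1"
      using mcm_attained[of "{1..k}" L1 G, OF finite_atLeastAtMost finL1] by blast
    define M' where "M' = M - {p. snd p = i}"
    have finM: "finite M" using match_sub[OF M(1)] finL1
      by (meson finite_SigmaI finite_atLeastAtMost finite_subset)
    have "is_matching G {1..k} B M'"
    proof (rule match_intro)
      show "M' \<subseteq> {1..k} \<times> B" using match_sub[OF M(1)] unfolding M'_def L1_def by auto
      show "G j c = 1" if "(j, c) \<in> M'" for j c using that match_one[OF M(1)] unfolding M'_def by auto
      show "j = j' \<and> c = c'" if "(j, c) \<in> M'" "(j', c') \<in> M'" "j = j' \<or> c = c'" for j c j' c'
        using that match_pair[OF M(1)] unfolding M'_def by blast
    qed
    then have "card M' \<le> mcm G {1..k} B" by (rule matching_le_mcm[OF finite_atLeastAtMost finB])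
    moreover have "card (M \<inter> {p. snd p = i}) \<le> 1"
    proof -
      have "\<forall>a\<in>M \<inter> {p. snd p = i}. \<forall>b\<in>M \<inter> {p. snd p = i}. a = b"
      proof (intro ballI)
        fix a b assume ab: "a \<in> M \<inter> {p. snd p = i}" "b \<in> M \<inter> {p. snd p = i}"
        obtain j c where ja: "a = (j, c)" by (rule prod.exhaust)
        obtain j' c' where jb: "b = (j', c')" by (rule prod.exhaust)
        note jc = ja jb
        have "c = c'" using ab jc by simp
        moreover have "(j, c) \<in> M" "(j', c') \<in> M" using ab jc by blast+
        ultimately have "j = j' \<and> c = c'" using match_pair[OF M(1), of j c j' c'] by blast
        then show "a = b" using jc by simp
      qed
      then show ?thesis using finM by (simp add: card_le_Suc0_iff_eq)
    qed
    moreover have "card M = card M' + card (M \<inter> {p. snd p = i})"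
    proof -
      have e: "M = M' \<union> (M \<inter> {p. snd p = i})" unfolding M'_def by blast
      have d: "M' \<inter> (M \<inter> {p. snd p = i}) = {}" unfolding M'_def by blast
      have f1: "finite M'" unfolding M'_def using finM by simp
      have f2: "finite (M \<inter> {p. snd p = i})" using finM by simp
      have "card (M' \<union> (M \<inter> {p. snd p = i})) = card M' + card (M \<inter> {p. snd p = i})"
        by (rule card_Un_disjoint[OF f1 f2 d])
      then show ?thesis using e by simp
    qed
    ultimately show ?thesis using M(2) by linarith
  qed
  have mcmB: "mcm G {1..k} B \<le> card (B \<inter> Fk)"
  proof -
    obtain M where M: "is_matching G {1..k} B M" "card M = mcm G {1..k} B"
      using mcm_attained[of "{1..k}" B G, OF finite_atLeastAtMost finB] by blast
    have "snd ` M \<subseteq> B \<inter> Fk"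
    proof
      fix c assume "c \<in> snd ` M"
      then obtain p where p: "p \<in> M" "c = snd p" by (rule imageE)
      obtain j where "p = (j, c)" using p(2) by (cases p) simp
      then have "(j, c) \<in> M" using p(1) by simp
      then have jc: "j \<in> {1..k}" "c \<in> B" "G j c = 1" using match_sub[OF M(1)] match_one[OF M(1)] by blast+
      have "c \<in> {1..m}" using jc(2) unfolding B_def by blast
      then have "c \<in> Fk" by (rule mem_Fk[OF jc(1) _ jc(3)])
      then show "c \<in> B \<inter> Fk" using jc(2) by blast
    qed
    then have "card (snd ` M) \<le> card (B \<inter> Fk)" using finB by (meson card_mono finite_Int)
    moreover have "card (snd ` M) = card M" using matching_inj_snd[OF M(1)] by (rule card_image)
    ultimately show ?thesis using M(2) by linarith
  qed
  define C where "C = Fk - A i"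
  have Ai_sub: "A i \<subseteq> Fk" using c2 unfolding Fk_def by auto
  have iFk: "i \<in> Fk" using c2 unfolding Fk_def by auto
  have iA: "i \<notin> A i" using ic_instance i_range by auto
  have C_eq: "C = insert i (B \<inter> Fk)" unfolding C_def B_def using Fk_sub iFk iA by auto
  have iB: "i \<notin> B" unfolding B_def by auto
  have cardC: "card C = card (B \<inter> Fk) + 1" unfolding C_eq using iB finB by auto
  have cardC2: "card C = card Fk - card (A i)" unfolding C_def using Ai_sub finFk
    by (simp add: card_Diff_subset finite_subset)
  have cardFk: "card Fk = d - 1 + k" using c1 unfolding Fk_def .
  have C_le_k: "card C \<le> k" using cardC2 cardFk c3 by linarith
  define S where "S = (\<lambda>c. {j \<in> {1..k}. G j c = 1})"
  have finC: "finite C" unfolding C_def using finFk by auto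
  have "\<forall>J\<subseteq>C. card J \<le> card (\<Union>(S ` J))"
  proof (intro allI impI)
    fix J assume J: "J \<subseteq> C"
    define N where "N = \<Union>(S ` J)"
    define K where "K = {1..k} - N"
    have N_sub: "N \<subseteq> {1..k}" unfolding N_def S_def by auto
    have cardN: "card N \<le> k" using card_mono[OF finite_atLeastAtMost N_sub] by simp
    have finJ: "finite J" using J finC finite_subset by blast
    show "card J \<le> card (\<Union>(S ` J))"
    proof (cases "K = {}")
      case True
      then have "N = {1..k}" using N_sub unfolding K_def by auto
      then have "card N = k" by simp
      moreover have "card J \<le> card C" using J finC card_mono by blast
      ultimately show ?thesis using C_le_k unfolding N_def by linarith
    next
      case False
      have "K \<subseteq> {1..k}" unfolding K_def by blast
      then have KF: "card (F_set G m K) \<ge> d - 1 + card K" using hall False by blast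
      have "F_set G m K \<subseteq> Fk - J"
      proof
        fix c assume c: "c \<in> F_set G m K"
        then obtain j where j: "j \<in> K" "c \<in> {1..m}" "G j c = 1"
          unfolding F_set_def row_supp_def by auto
        have "j \<in> {1..k}" using j unfolding K_def by auto
        then have "c \<in> Fk" using mem_Fk j by auto
        moreover have "c \<notin> J"
        proof
          assume "c \<in> J"
          then have "j \<in> N" unfolding N_def S_def using j \<open>j \<in> {1..k}\<close> by auto
          then show False using j unfolding K_def by auto
        qed
        ultimately show "c \<in> Fk - J" by auto
      qed
      then have "card (F_set G m K) \<le> card (Fk - J)" using finFk by (simp add: card_mono)
      moreover have "card (Fk - J) = card Fk - card J"
        using J finJ unfolding C_def by (subst card_Diff_subset) auto
      moreover have "card K = k - card N" unfolding K_def using N_sub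
        by (subst card_Diff_subset) (auto intro: finite_subset)
      moreover have "card J \<le> card Fk" using J finFk unfolding C_def by (meson Diff_subset card_mono subset_trans)
      ultimately show ?thesis using KF cardFk cardN unfolding N_def by linarith
    qed
  qed
  moreover have "\<forall>x\<in>C. finite (S x)" unfolding S_def by auto
  ultimately obtain f where f: "inj_on f C" "\<forall>x\<in>C. f x \<in> S x"
    using hall_marriage[of C S, OF finC] by blast
  define M where "M = (\<lambda>c. (f c, c)) ` C"
  have "is_matching G {1..k} L1 M"
  proof -
    have "C \<subseteq> L1" unfolding C_eq L1_def by auto
    then have 1: "M \<subseteq> {1..k} \<times> L1" using f unfolding M_def S_def by auto
    have 2: "\<forall>(j,c)\<in>M. G j c = 1" using f unfolding M_def S_def by auto
    have 3: "\<forall>(j,c)\<in>M. \<forall>(j',c')\<in>M. (j = j' \<or> c = c') \<longrightarrow> (j,c) = (j',c')"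
      unfolding M_def using f(1) unfolding inj_on_def by blast
    show ?thesis
    proof (rule match_intro)
      show "M \<subseteq> {1..k} \<times> L1" by (rule 1)
      show "G j c = 1" if "(j, c) \<in> M" for j c using 2 that by blast
      show "j = j' \<and> c = c'" if "(j, c) \<in> M" "(j', c') \<in> M" "j = j' \<or> c = c'" for j c j' c'
        using 3 that by blast
    qed
  qed
  then have "card M \<le> mcm G {1..k} L1" by (rule matching_le_mcm[OF finite_atLeastAtMost finL1])
  moreover have "card M = card C" unfolding M_def by (rule card_image) (auto simp: inj_on_def)
  ultimately have lower: "1 + mcm G {1..k} B \<le> mcm G {1..k} L1" using cardC mcmB by linarith
  show ?thesis using upper lower unfolding L1_def B_def by linarith
qed

end
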